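(* Let $\alpha>1$ be an integer with $\alpha\equiv 2\pmod 3$. Then for every positive integer $a$, $$S_3^1(a)\leq 1.3\, a^{\log_3 2},$$ where $S_3^1(a)$ is the number of integers $0\le s<a$ such that the base-$3$ representation of $\alpha^s$ contains no digit equal to $2$.
   Context: In general, for an odd prime $p$, a base-$p$ digit $d$ is large if $d\ge p/2$, and $S_p^n(a)=\#\{0\le s<a : (\alpha^s)_p\text{ contains fewer than } n \text{ large digits}\}$; for $p=3$, $n=1$ this is as stated in the claim. *)

theory Defs
  imports Complex_Main
begin

fun digits :: "nat \<Rightarrow> nat \<Rightarrow> nat list" where
  "digits p m = (if p < 2 \<or> m = 0 then [] else m mod p # digits p (m div p))"

declare digits.simps[simp del]

definition num_large_digits :: "nat \<Rightarrow> nat \<Rightarrow> nat" where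
  "num_large_digits p m = length (filter (\<lambda>d. 2 * d \<ge> p) (digits p m))"

definition S :: "nat \<Rightarrow> nat \<Rightarrow> nat \<Rightarrow> nat \<Rightarrow> nat" where
  "S \<alpha> p n a = card {s. s < a \<and> num_large_digits p (\<alpha> ^ s) < n}"

end

theory Submission
  imports Defs "HOL-Number_Theory.Number_Theory"
begin

lemma lte_A:
  fixes b j c :: nat
  assumes "j \<ge> 1" "b = 1 + 3^j*c"
  shows "[b^d = 1 + d*3^j*c] (mod 3^(j+1))"
proof (induction d)
  case 0 then show ?case by simp
next
  case (Suc d)
  have "[b^Suc d = (1 + d*3^j*c) * b] (mod 3^(j+1))"
    using Suc cong_mult[OF Suc cong_refl[of b]] by (simp add: mult.commute)
  moreover have "(1 + d*3^j*c) * b = 1 + Suc d*3^j*c + (d*c*c) * (3^j*3^j)"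
    using assms(2) by (simp add: algebra_simps)
  moreover have "3^(j+1) dvd (3::nat)^j*3^j"
    using assms(1) by (metis add.commute le_Suc_ex mult_dvd_mono dvd_refl power_Suc power_add dvd_triv_left plus_1_eq_Suc)
  hence "[(d*c*c) * (3^j*3^j) = 0] (mod 3^(j+1))"
    by (metis cong_0_iff dvd_mult)
  hence "[1 + Suc d*3^j*c + (d*c*c) * (3^j*3^j) = 1 + Suc d*3^j*c + 0] (mod 3^(j+1))"
    by (rule cong_add[OF cong_refl])
  hence "[1 + Suc d*3^j*c + (d*c*c) * (3^j*3^j) = 1 + Suc d*3^j*c] (mod 3^(j+1))"
    by simp
  ultimately show ?case using cong_trans by metis
qed

lemma lte_B:
  fixes d j c :: nat
  assumes "\<not> 3 dvd c" "[1 + d*3^j*c = 1] (mod 3^(j+1))"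
  shows "3 dvd d"
proof -
  have "3^(j+1) dvd d*3^j*c"
    using assms(2) by (metis add.commute cong_add_lcancel_0_nat cong_0_iff)
  hence "3^j * 3 dvd 3^j * (d*c)" by (simp add: ac_simps)
  hence "3 dvd d*c" by simp
  moreover have p3: "prime (3::nat)" by (auto simp: prime_nat_iff'' less_Suc_eq numeral_3_eq_3)
  ultimately show ?thesis using assms(1) prime_dvd_mult_nat[OF p3] by blast
qed

lemma lte:
  fixes n :: nat
  shows "\<And>(b::nat) j (c::nat) d. j \<ge> 1 \<Longrightarrow> \<not> 3 dvd c \<Longrightarrow> b = 1 + 3^j*c \<Longrightarrow> [b^d = 1] (mod 3^(j+n)) \<Longrightarrow> 3^n dvd d"
proof (induction n)
  case 0 then show ?case by simp
next
  case (Suc n b j c d)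
  have "[b^d = 1] (mod 3^(j+1))"
  proof -
    have "(3::nat)^(j+1) dvd 3^(j + Suc n)" by (rule le_imp_power_dvd) simp
    thus ?thesis using Suc.prems(4) by (rule cong_dvd_modulus_nat[rotated])
  qed
  hence "[1 + d*3^j*c = 1] (mod 3^(j+1))"
    using cong_trans[OF cong_sym[OF lte_A[OF Suc.prems(1) Suc.prems(3), of d]]] by blast
  hence "3 dvd d" using lte_B Suc.prems(2) by blast
  then obtain e where e: "d = 3*e" by blast
  obtain k where k: "j = Suc k" using Suc.prems(1) by (cases j) auto
  define c' where "c' = c + 3^j*c^2 + 3^(2*k+1)*c^3"
  have b3: "b^3 = 1 + 3^(j+1)*c'"
  proof -
    define x where "x = (3::nat)^j*c"
    have bx: "b = 1 + x" unfolding x_def Suc.prems(3) ..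
    have e1: "(3::nat)^(j+1)*c = 3*x" unfolding x_def by simp
    have e2: "(3::nat)^(j+1)*(3^j*c^2) = 3*x^2" unfolding x_def by (simp add: power2_eq_square power_add)
    have e3: "(3::nat)^(j+1)*(3^(2*k+1)*c^3) = x^3" unfolding x_def k
      by (simp add: power3_eq_cube power_add power_mult_distrib mult_2 power_Suc)
    have "b^3 = 1 + 3*x + 3*x^2 + x^3" unfolding bx by (simp add: power3_eq_cube power2_eq_square algebra_simps)
    also have "\<dots> = 1 + 3^(j+1)*c'" unfolding c'_def by (simp only: add_mult_distrib2 e1 e2 e3 add.assoc)
    finally show ?thesis .
  qed
  have "\<not> 3 dvd c'"
  proof
    assume "3 dvd c'"
    moreover have "3 dvd (3::nat)^j*c^2 + 3^(2*k+1)*c^3" unfolding k by (intro dvd_add) simp_all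
    ultimately have "3 dvd c" unfolding c'_def by (metis add.assoc dvd_add_left_iff)
    thus False using Suc.prems(2) by simp
  qed
  moreover have "[(b^3)^e = 1] (mod 3^((j+1)+n))"
    using Suc.prems(4) e by (simp add: power_mult)
  ultimately have "3^n dvd e" using Suc.IH[OF _ _ b3] by simp
  thus ?case using e by simp
qed


lemma digit2_in:
  fixes x :: nat
  shows "x div 3^i mod 3 = 2 \<Longrightarrow> 2 \<in> set (digits 3 x)"
proof (induction i arbitrary: x)
  case 0
  hence "x \<noteq> 0" by auto
  thus ?case using 0 by (subst digits.simps) simp
next
  case (Suc i)
  have "x \<noteq> 0" using Suc.prems by (cases "x = 0") auto
  have "(x div 3) div 3^i mod 3 = 2" using Suc.prems by (simp add: div_mult2_eq)
  hence "2 \<in> set (digits 3 (x div 3))" by (rule Suc.IH)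
  thus ?case using \<open>x \<noteq> 0\<close> by (subst digits.simps) simp
qed

lemma good_digits:
  fixes x :: nat
  assumes "num_large_digits 3 x < 1"
  shows "x div 3^i mod 3 \<noteq> 2"
proof
  assume "x div 3^i mod 3 = 2"
  hence "2 \<in> set (digits 3 x)" by (rule digit2_in)
  hence "filter (\<lambda>d. 2 * d \<ge> (3::nat)) (digits 3 x) \<noteq> []"
    by (metis (mono_tags, lifting) filter_empty_conv le_add2 mult_2 numeral_Bit1 numeral_One one_add_one Suc_eq_plus1 nat_1_add_1 add_2_eq_Suc' not_less_eq_eq)
  thus False using assms unfolding num_large_digits_def by simp
qed

definition E :: "nat \<Rightarrow> nat set" where
  "E m = {y. y < 3^m \<and> (\<forall>i<m. y div 3^i mod 3 \<noteq> 2)}"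

lemma card_E: "card (E m) \<le> 2^m"
proof (induction m)
  case 0
  have "E 0 \<subseteq> {0}" unfolding E_def by auto
  from card_mono[OF _ this] show ?case by simp
next
  case (Suc m)
  have "E (Suc m) \<subseteq> (\<lambda>(d,y). d + 3*y) ` ({0,1} \<times> E m)"
  proof
    fix y assume y: "y \<in> E (Suc m)"
    have "y mod 3 \<noteq> 2" using y unfolding E_def by force
    hence d: "y mod 3 \<in> {0,1}" by auto
    have y1: "y < 3^Suc m" and y2: "\<And>i. i < Suc m \<Longrightarrow> y div 3^i mod 3 \<noteq> 2"
      using y unfolding E_def by auto
    have "y div 3 < 3^m" using y1 by (simp add: less_mult_imp_div_less mult.commute)
    moreover have "y div 3 div 3^i mod 3 \<noteq> 2" if "i < m" for i
      using y2[of "Suc i"] that by (simp add: div_mult2_eq)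
    ultimately have "y div 3 \<in> E m" unfolding E_def by auto
    show "y \<in> (\<lambda>(d,y). d + 3*y) ` ({0,1} \<times> E m)"
    proof (rule image_eqI[of _ _ "(y mod 3, y div 3)"])
      show "y = (case (y mod 3, y div 3) of (d, y) \<Rightarrow> d + 3 * y)" by simp
      show "(y mod 3, y div 3) \<in> {0, 1} \<times> E m" using d \<open>y div 3 \<in> E m\<close> by simp
    qed
  qed
  moreover have "finite (E m)" unfolding E_def by auto
  ultimately have "card (E (Suc m)) \<le> card ({0::nat,1} \<times> E m)"
    by (meson card_image_le finite_SigmaI finite.emptyI finite_insert card_mono finite_imageI le_trans)
  also have "\<dots> = 2 * card (E m)" by (simp add: card_cartesian_product)
  finally show ?case using Suc.IH by simp
qed


lemma digit_mod:
  fixes x :: nat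
  assumes "i < m"
  shows "(x mod 3^m) div 3^i mod 3 = x div 3^i mod 3"
proof -
  have m: "(3::nat)^m = 3^i * 3^(m-i)" using assms by (simp add: power_add[symmetric])
  have "x mod 3^m = 3^i * (x div 3^i mod 3^(m-i)) + x mod 3^i"
    unfolding m by (rule mod_mult2_eq)
  hence "(x mod 3^m) div 3^i = x div 3^i mod 3^(m-i)" by simp
  moreover have "(3::nat) dvd 3^(m-i)" using assms by simp
  ultimately show ?thesis by (simp add: mod_mod_cancel)
qed

lemma factor3:
  fixes n :: nat
  shows "n > 0 \<Longrightarrow> \<exists>j c. n = 3^j * c \<and> \<not> 3 dvd c"
proof (induction n rule: less_induct)
  case (less n)
  show ?case
  proof (cases "3 dvd n")
    case True
    then obtain k where k: "n = 3*k" by blast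
    with less.prems have "k > 0" "k < n" by auto
    then obtain j c where "k = 3^j*c" "\<not> 3 dvd c" using less.IH by blast
    hence "n = 3^Suc j * c" using k by simp
    thus ?thesis using \<open>\<not> 3 dvd c\<close> by blast
  next
    case False
    hence "n = 3^0 * n" by simp
    thus ?thesis using False by blast
  qed
qed

lemma count_bound:
  fixes \<beta> m :: nat
  assumes b3: "\<beta> mod 3 = 1" and b1: "\<beta> > 1"
  shows "card {t. t < 3^m \<and> (\<forall>i. \<beta>^t div 3^i mod 3 \<noteq> 2)} \<le> 2^m"
proof -
  obtain j c where jc: "\<beta> - 1 = 3^j * c" "\<not> 3 dvd c" using factor3[of "\<beta> - 1"] b1 by auto
  have "j \<noteq> 0"
  proof
    assume "j = 0"
    hence "c = \<beta> - 1" using jc by simp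
    moreover have "3 dvd \<beta> - 1" using b3 b1 by (metis dvd_minus_mod minus_mod_eq_mult_div dvd_triv_left)
    ultimately show False using jc by simp
  qed
  hence j1: "j \<ge> 1" by simp
  have bj: "\<beta> = 1 + 3^j * c" using jc b1 by simp
  define f where "f t = \<beta>^t div 3^j mod 3^m" for t
  have c1: "[\<beta> = 1] (mod 3^j)" unfolding bj cong_def by (simp only: mod_mult_self2)
  have low: "\<beta>^t mod 3^j = 1 mod 3^j" for t
    using cong_pow[OF c1, of t] by (simp add: cong_def)
  have split: "\<beta>^t mod 3^(j+m) = 3^j * f t + 1 mod 3^j" for t
    unfolding f_def power_add using mod_mult2_eq[of "\<beta>^t" "3^j" "3^m"] low[of t] by simp
  have cop: "coprime (\<beta>^t) (3^(j+m))" for t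
  proof -
    have "coprime \<beta> 3" using b3
      by (metis coprime_mod_left_iff coprime_1_left zero_neq_numeral)
    thus ?thesis by simp
  qed
  have neq: "f t \<noteq> f t'" if "t < t'" "t' < 3^m" for t t'
  proof
    assume "f t = f t'"
    hence "[\<beta>^t * 1 = \<beta>^t * \<beta>^(t'-t)] (mod 3^(j+m))"
      using split[of t] split[of t'] that by (simp add: cong_def power_add[symmetric])
    hence "[\<beta>^(t'-t) = 1] (mod 3^(j+m))"
      using cong_mult_lcancel_nat[OF cop[of t]] cong_sym by blast
    hence "3^m dvd t' - t" using lte[OF j1 jc(2) bj] by blast
    moreover have "t' - t > 0" "t' - t < 3^m" using that by auto
    ultimately show False by (meson nat_dvd_not_less)
  qed
  let ?A = "{t. t < 3^m \<and> (\<forall>i. \<beta>^t div 3^i mod 3 \<noteq> 2)}"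
  have inj: "inj_on f ?A"
  proof (rule inj_onI)
    fix t t' assume "t \<in> ?A" "t' \<in> ?A" "f t = f t'"
    thus "t = t'" using neq by (metis (no_types, lifting) linorder_neqE_nat mem_Collect_eq)
  qed
  have img: "f ` ?A \<subseteq> E m"
  proof
    fix y assume "y \<in> f ` ?A"
    then obtain t where t: "t \<in> ?A" "y = f t" by blast
    have "y < 3^m" using t unfolding f_def by simp
    moreover have "y div 3^i mod 3 \<noteq> 2" if "i < m" for i
    proof -
      have "y div 3^i mod 3 = \<beta>^t div 3^j div 3^i mod 3"
        using t(2) digit_mod[OF that] unfolding f_def by simp
      also have "\<dots> = \<beta>^t div 3^(j+i) mod 3" by (simp add: div_mult2_eq power_add)
      finally show ?thesis using t(1) by simp
    qed
    ultimately show "y \<in> E m" unfolding E_def by auto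
  qed
  have "card ?A = card (f ` ?A)" using inj by (simp add: card_image)
  also have "\<dots> \<le> card (E m)" using img by (intro card_mono) (auto simp: E_def)
  also have "\<dots> \<le> 2^m" by (rule card_E)
  finally show ?thesis .
qed


lemma log32_lower: "5/8 \<le> log 3 (2::real)"
proof -
  have "3 powr (5/8) \<le> (2::real)"
  proof (rule ccontr)
    assume "\<not> 3 powr (5/8) \<le> (2::real)"
    hence "(2::real)^8 < (3 powr (5/8))^8"
      by (intro power_strict_mono) auto
    also have "(3 powr (5/8))^8 = (3::real) powr 5"
      by (simp add: powr_realpow[symmetric] powr_powr)
    also have "\<dots> = 3^5" by (simp add: powr_realpow)
    finally show False by simp
  qed
  thus ?thesis by (subst le_log_iff) auto
qed

lemma two_powr_lower: "20/13 \<le> (2::real) powr (log 3 2)"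
proof -
  have "20/13 \<le> (2::real) powr (5/8)"
  proof (rule ccontr)
    assume "\<not> 20/13 \<le> (2::real) powr (5/8)"
    hence "(2 powr (5/8))^8 < (20/13::real)^8"
      by (intro power_strict_mono) auto
    also have "(2 powr (5/8))^8 = (2::real) powr 5"
      by (simp add: powr_realpow[symmetric] powr_powr)
    also have "\<dots> = 2^5" by (simp add: powr_realpow)
    also have "(20/13::real)^8 = 20^8/13^8" by (simp add: power_divide)
    finally show False by (simp add: divide_less_eq)
  qed
  also have "\<dots> \<le> 2 powr (log 3 2)" using log32_lower by (intro powr_mono) auto
  finally show ?thesis .
qed

lemma final_real:
  fixes a k :: nat
  assumes "2 * 3^k < a"
  shows "(2::real)^Suc k \<le> 1.3 * real a powr (log 3 2)"
proof -
  let ?x = "log 3 (2::real)"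
  have x0: "?x \<ge> 0" by simp
  have "real (2*3^k) powr ?x \<le> real a powr ?x"
    using assms of_nat_le_iff[of "2*3^k" a] by (intro powr_mono2) auto
  moreover have "real (2*3^k) powr ?x = 2 powr ?x * 2^k"
  proof -
    have "real (2*3^k) powr ?x = 2 powr ?x * (3^k) powr ?x"
      by (simp add: powr_mult)
    also have "((3::real)^k) powr ?x = 2^k"
    proof -
      have e: "(3::real) powr ?x = 2" by simp
      have "((3::real)^k) powr ?x = (3 powr real k) powr ?x" by (simp add: powr_realpow)
      also have "\<dots> = 3 powr (?x * real k)" by (simp only: powr_powr mult.commute)
      also have "\<dots> = (3 powr ?x) powr real k" by (simp only: powr_powr)
      also have "\<dots> = 2 powr real k" by (simp only: e)
      also have "\<dots> = 2^k" by (simp add: powr_realpow)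
      finally show ?thesis .
    qed
    finally show ?thesis .
  qed
  ultimately have "2 powr ?x * 2^k \<le> real a powr ?x" by simp
  moreover have "20/13 * 2^k \<le> 2 powr ?x * (2::real)^k"
    by (rule mult_right_mono[OF two_powr_lower]) simp
  moreover have "(2::real)^Suc k = 1.3 * (20/13 * 2^k)" by simp
  ultimately show ?thesis by linarith
qed

theorem theorem2p6:
  fixes \<alpha> a :: nat
  assumes "\<alpha> > 1" and "\<alpha> mod 3 = 2" and "a > 0"
  shows "real (S \<alpha> 3 1 a) \<le> 1.3 * real a powr (log 3 2)"
proof -
  define m where "m = (LEAST m. a \<le> 2*3^m)"
  have ex: "a \<le> 2*3^a"
  proof -
    have "a < 3^a" by (induction a) auto
    thus ?thesis by simp
  qed
  have am: "a \<le> 2*3^m" unfolding m_def by (rule LeastI[of "\<lambda>m. a \<le> 2*3^m", OF ex])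
  have mmin: "\<not> a \<le> 2*3^k" if "k < m" for k using not_less_Least[of k "\<lambda>m. a \<le> 2*3^m"] that unfolding m_def by blast
  let ?\<beta> = "\<alpha>^2"
  have b3: "?\<beta> mod 3 = 1" using assms(2) by (simp add: power_mod[symmetric])
  have b1: "?\<beta> > 1" using assms(1) one_less_power[of \<alpha> 2] by simp
  let ?A = "{t. t < 3^m \<and> (\<forall>i. ?\<beta>^t div 3^i mod 3 \<noteq> 2)}"
  let ?G = "{s. s < a \<and> num_large_digits 3 (\<alpha> ^ s) < 1}"
  have sub: "?G \<subseteq> (\<lambda>t. 2*t) ` ?A"
  proof
    fix s assume s: "s \<in> ?G"
    hence g: "\<And>i. \<alpha>^s div 3^i mod 3 \<noteq> 2" using good_digits by blast
    have "even s"
    proof (rule ccontr)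
      assume "odd s"
      then obtain k where k: "s = 2*k+1" by (metis oddE)
      have "\<alpha>^s mod 3 = ((\<alpha> mod 3)^s) mod 3" by (simp add: power_mod)
      also have "\<dots> = (2 * 4^k) mod 3" using assms(2) k by (simp add: power_mult power_add)
      also have "\<dots> = (2 * (4^k mod 3)) mod 3" by (simp add: mod_mult_right_eq)
      also have "4^k mod 3 = (1::nat)"
        using power_mod[of "4::nat" 3 k] by simp
      finally have "\<alpha>^s mod 3 = 2" by simp
      thus False using g[of 0] by simp
    qed
    then obtain t where t: "s = 2*t" by blast
    have "t < 3^m" using s am t by auto
    moreover have "?\<beta>^t = \<alpha>^s" using t by (simp add: power_mult)
    ultimately show "s \<in> (\<lambda>t. 2*t) ` ?A" using g t by auto
  qed
  have "S \<alpha> 3 1 a = card ?G" unfolding S_def by simp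
  also have "\<dots> \<le> card ((\<lambda>t. 2*t) ` ?A)" using sub by (intro card_mono) auto
  also have "\<dots> \<le> card ?A" by (rule card_image_le) auto
  also have "\<dots> \<le> 2^m" by (rule count_bound[OF b3 b1])
  finally have c: "real (S \<alpha> 3 1 a) \<le> 2^m" by (simp add: of_nat_le_iff[symmetric])
  show ?thesis
  proof (cases m)
    case 0
    have "1 \<le> real a powr (log 3 2)" using assms(3) by (intro ge_one_powr_ge_zero) auto
    thus ?thesis using c 0 by simp
  next
    case (Suc k)
    hence "2*3^k < a" using mmin[of k] by simp
    from final_real[OF this] show ?thesis using c Suc by simp
  qed
qed

end
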